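(* Let $\mathscr{M}$ be a von Neumann algebra. The set of unitaries $U \in \mathcal{U}(\mathscr{M})$ whose spectrum is contained in $C_k$ for some $k \in \{1,2,3,4\}$ is an open subset of $\mathcal{U}(\mathscr{M})$ in the norm (uniform) topology. Consequently, the norm-closure of $\mathcal{S}(\mathscr{M})^3$ is not equal to $\mathcal{U}(\mathscr{M})$; i.e. the set of products of three symmetries in $\mathscr{M}$ is not norm-dense in $\mathcal{U}(\mathscr{M})$.
   Context: $\mathcal{U}(\mathscr{M})$ is the unitary group of $\mathscr{M}$; a symmetry is a self-adjoint unitary; $\mathcal{S}(\mathscr{M})^3$ is the set of unitaries in $\mathscr{M}$ that are products of three symmetries in $\mathscr{M}$. For $1 \le k \le 4$, $C_k := \{\exp(2\pi i \alpha) : \tfrac{k-1}{4} < \alpha < \tfrac{k}{4}\}$, the four connected components of $S^1 \setminus \{1, i, -1, -i\}$, where $S^1$ is the unit circle in $\mathbb{C}$. *)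

theory Defs
  imports "HOL-Analysis.Analysis"
begin

text \<open>A complex Hilbert space: a complete real normed vector space together with a
complex scalar multiplication extending the real one and a complex inner product
(linear in the second argument, conjugate-linear in the first) inducing the norm.\<close>

class complex_hilbert = real_normed_vector + complete_space +
  fixes cscale :: "complex \<Rightarrow> 'a \<Rightarrow> 'a"
    and cinner :: "'a \<Rightarrow> 'a \<Rightarrow> complex"
  assumes cscale_add_right: "cscale c (x + y) = cscale c x + cscale c y"
    and cscale_add_left: "cscale (c + d) x = cscale c x + cscale d x"
    and cscale_cscale: "cscale c (cscale d x) = cscale (c * d) x"
    and cscale_of_real: "cscale (complex_of_real r) x = r *\<^sub>R x"
    and cinner_conj: "cinner x y = cnj (cinner y x)"
    and cinner_add_right: "cinner x (y + z) = cinner x y + cinner x z"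
    and cinner_cscale_right: "cinner x (cscale c y) = c * cinner x y"
    and cinner_self: "cinner x x = complex_of_real ((norm x)\<^sup>2)"

definition bounded_clinear :: "('a::complex_hilbert \<Rightarrow> 'a) \<Rightarrow> bool" where
  "bounded_clinear T \<longleftrightarrow> bounded_linear T \<and> (\<forall>c x. T (cscale c x) = cscale c (T x))"

definition adj :: "('a::complex_hilbert \<Rightarrow> 'a) \<Rightarrow> ('a \<Rightarrow> 'a)" where
  "adj T = (THE S. \<forall>x y. cinner (T x) y = cinner x (S y))"

definition commutant :: "('a::complex_hilbert \<Rightarrow> 'a) set \<Rightarrow> ('a \<Rightarrow> 'a) set" where
  "commutant A = {T. bounded_clinear T \<and> (\<forall>S\<in>A. T \<circ> S = S \<circ> T)}"

text \<open>Von Neumann algebra: a self-adjoint set of bounded operators on a Hilbert space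
equal to its bicommutant (equivalently, by the bicommutant theorem, a unital
SOT-closed *-subalgebra of B(H)).\<close>

definition von_neumann_algebra :: "('a::complex_hilbert \<Rightarrow> 'a) set \<Rightarrow> bool" where
  "von_neumann_algebra M \<longleftrightarrow>
     (\<forall>T\<in>M. bounded_clinear T) \<and> (\<forall>T\<in>M. adj T \<in> M) \<and> commutant (commutant M) = M"

definition unitaries :: "('a::complex_hilbert \<Rightarrow> 'a) set \<Rightarrow> ('a \<Rightarrow> 'a) set" where
  "unitaries M = {U\<in>M. adj U \<circ> U = id \<and> U \<circ> adj U = id}"

definition symmetries :: "('a::complex_hilbert \<Rightarrow> 'a) set \<Rightarrow> ('a \<Rightarrow> 'a) set" where
  "symmetries M = {S\<in>unitaries M. adj S = S}"

definition sym_cube :: "('a::complex_hilbert \<Rightarrow> 'a) set \<Rightarrow> ('a \<Rightarrow> 'a) set" where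
  "sym_cube M = {U\<in>unitaries M. \<exists>A\<in>symmetries M. \<exists>B\<in>symmetries M. \<exists>C\<in>symmetries M.
                    U = A \<circ> B \<circ> C}"

definition spectrum_in :: "('a::complex_hilbert \<Rightarrow> 'a) set \<Rightarrow> ('a \<Rightarrow> 'a) \<Rightarrow> complex set" where
  "spectrum_in M T = {z. \<not> (\<exists>S\<in>M. S \<circ> (\<lambda>x. T x - cscale z x) = id
                                  \<and> (\<lambda>x. T x - cscale z x) \<circ> S = id)}"

definition arc :: "nat \<Rightarrow> complex set" where
  "arc k = {exp (2 * of_real pi * \<i> * of_real \<alpha>) | \<alpha>::real.
              (real k - 1) / 4 < \<alpha> \<and> \<alpha> < real k / 4}"

definition norm_open_in :: "('a::complex_hilbert \<Rightarrow> 'a) set \<Rightarrow> ('a \<Rightarrow> 'a) set \<Rightarrow> bool" where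
  "norm_open_in X G \<longleftrightarrow> G \<subseteq> X \<and>
     (\<forall>U\<in>G. \<exists>e>0. \<forall>V\<in>X. onorm (\<lambda>x. V x - U x) < e \<longrightarrow> V \<in> G)"

definition norm_closure :: "('a::complex_hilbert \<Rightarrow> 'a) set \<Rightarrow> ('a \<Rightarrow> 'a) set" where
  "norm_closure A = {T. bounded_clinear T \<and> (\<forall>e>0. \<exists>S\<in>A. onorm (\<lambda>x. S x - T x) < e)}"

end

theory Submission
  imports Defs
begin



lemma cinner_add_left: "cinner (x + (y::'a::complex_hilbert)) z = cinner x z + cinner y z"
  by (metis cinner_conj cinner_add_right complex_cnj_add)

lemma cinner_cscale_left: "cinner (cscale c (x::'a::complex_hilbert)) y = cnj c * cinner x y"
  by (metis cinner_conj cinner_cscale_right complex_cnj_mult complex_cnj_cnj)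

lemma cinner_zero_right[simp]: "cinner (x::'a::complex_hilbert) 0 = 0"
  using cinner_add_right[of x 0 0] by simp

lemma cinner_zero_left[simp]: "cinner 0 (x::'a::complex_hilbert) = 0"
  using cinner_add_left[of 0 0 x] by simp

lemma cinner_minus_right: "cinner x (- (y::'a::complex_hilbert)) = - cinner x y"
  using cinner_add_right[of x y "-y"] by (simp add: add_eq_0_iff)

lemma cinner_minus_left: "cinner (- (x::'a::complex_hilbert)) y = - cinner x y"
  using cinner_add_left[of x "-x" y] by (simp add: add_eq_0_iff)

lemma cinner_diff_right: "cinner x (y - (z::'a::complex_hilbert)) = cinner x y - cinner x z"
  using cinner_add_right[of x y "-z"] cinner_minus_right[of x z] by simp

lemma cinner_diff_left: "cinner (y - (z::'a::complex_hilbert)) x = cinner y x - cinner z x"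
  using cinner_add_left[of y "-z" x] cinner_minus_left[of z x] by simp

lemma cscale_one[simp]: "cscale 1 (x::'a::complex_hilbert) = x"
  using cscale_of_real[of 1 x] by simp

lemma cscale_zero[simp]: "cscale 0 (x::'a::complex_hilbert) = 0"
  using cscale_of_real[of 0 x] by simp

lemma cscale_zero_right[simp]: "cscale c (0::'a::complex_hilbert) = 0"
  using cscale_add_right[of c 0 0] by simp

lemma cscale_minus_right: "cscale c (- (x::'a::complex_hilbert)) = - cscale c x"
  using cscale_add_right[of c x "-x"] by (simp add: add_eq_0_iff)

lemma cscale_diff_right: "cscale c (x - (y::'a::complex_hilbert)) = cscale c x - cscale c y"
  using cscale_add_right[of c x "-y"] cscale_minus_right[of c y] by simp

lemma cscale_minus_left: "cscale (- c) (x::'a::complex_hilbert) = - cscale c x"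
  using cscale_add_left[of c "-c" x] by (simp add: add_eq_0_iff)

lemma cscale_diff_left: "cscale (c - d) (x::'a::complex_hilbert) = cscale c x - cscale d x"
  using cscale_add_left[of c "-d" x] cscale_minus_left[of d x] by simp

lemma scaleR_cscale: "r *\<^sub>R (x::'a::complex_hilbert) = cscale (complex_of_real r) x"
  by (simp add: cscale_of_real)

lemma cscale_scaleR: "cscale c (r *\<^sub>R (x::'a::complex_hilbert)) = r *\<^sub>R cscale c x"
  by (simp add: scaleR_cscale cscale_cscale mult.commute)

lemma norm_sq_cinner: "(norm (x::'a::complex_hilbert))\<^sup>2 = Re (cinner x x)"
  by (simp add: cinner_self)

lemma cinner_self_eq_zero: "cinner (x::'a::complex_hilbert) x = 0 \<longleftrightarrow> x = 0"
  by (simp add: cinner_self)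

lemma norm_cscale: "norm (cscale c (x::'a::complex_hilbert)) = cmod c * norm x"
proof -
  have "cinner (cscale c x) (cscale c x) = cnj c * c * cinner x x"
    by (simp add: cinner_cscale_left cinner_cscale_right mult.assoc)
  then have "complex_of_real ((norm (cscale c x))\<^sup>2) = cnj c * c * complex_of_real ((norm x)\<^sup>2)"
    by (simp only: cinner_self)
  also have "\<dots> = complex_of_real ((cmod c * norm x)\<^sup>2)"
  proof -
    have "cnj c * c = complex_of_real ((cmod c)\<^sup>2)"
      using complex_norm_square[of c] by (simp only: mult.commute)
    then show ?thesis by (simp add: power_mult_distrib)
  qed
  finally have "(norm (cscale c x))\<^sup>2 = (cmod c * norm x)\<^sup>2" by (simp only: of_real_eq_iff)
  then show ?thesis
    by (simp add: power2_eq_iff_nonneg)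
qed

lemma cinner_add_add_cnj: "cinner (x::'a::complex_hilbert) y + cinner y x = complex_of_real (2 * Re (cinner x y))"
  by (metis cinner_conj complex_add_cnj)

lemma norm_add_sq: "(norm (x + (y::'a::complex_hilbert)))\<^sup>2 = (norm x)\<^sup>2 + (norm y)\<^sup>2 + 2 * Re (cinner x y)"
proof -
  have "cinner (x+y) (x+y) = cinner x x + cinner y y + (cinner x y + cinner y x)"
    by (simp add: cinner_add_left cinner_add_right)
  then show ?thesis
    by (simp add: norm_sq_cinner cinner_add_add_cnj)
qed

lemma norm_diff_sq: "(norm (x - (y::'a::complex_hilbert)))\<^sup>2 = (norm x)\<^sup>2 + (norm y)\<^sup>2 - 2 * Re (cinner x y)"
  using norm_add_sq[of x "-y"] by (simp add: cinner_minus_right)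

lemma re_cinner_le_unit:
  assumes "norm (x::'a::complex_hilbert) = 1" "norm y = 1" shows "Re (cinner x y) \<le> 1"
proof -
  have "0 \<le> (norm (x - y))\<^sup>2" by simp
  then show ?thesis using norm_diff_sq[of x y] assms by simp
qed

lemma re_cinner_le: "Re (cinner (x::'a::complex_hilbert) y) \<le> norm x * norm y"
proof (cases "x = 0 \<or> y = 0")
  case True then show ?thesis by auto
next
  case False
  let ?x = "cscale (complex_of_real (1 / norm x)) x" and ?y = "cscale (complex_of_real (1 / norm y)) y"
  have "norm ?x = 1" "norm ?y = 1" using False by (simp_all add: norm_cscale norm_divide)
  then have "Re (cinner ?x ?y) \<le> 1" by (rule re_cinner_le_unit)
  then have "Re (cinner x y) / (norm x * norm y) \<le> 1"
    by (simp add: cinner_cscale_left cinner_cscale_right mult.commute)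
  then show ?thesis using False by (simp add: divide_le_eq)
qed

lemma cauchy_schwarz: "cmod (cinner (x::'a::complex_hilbert) y) \<le> norm x * norm y"
proof (cases "cinner x y = 0")
  case True then show ?thesis by simp
next
  case False
  define u where "u = cnj (cinner x y) / cmod (cinner x y)"
  have u: "cmod u = 1" using False by (simp add: u_def norm_divide)
  have "cinner x (cscale u y) = cnj (cinner x y) * cinner x y / cmod (cinner x y)"
    by (simp add: cinner_cscale_right u_def)
  also have "\<dots> = complex_of_real ((cmod (cinner x y))\<^sup>2 / cmod (cinner x y))"
  proof -
    have "cnj (cinner x y) * cinner x y = complex_of_real ((cmod (cinner x y))\<^sup>2)"
      using complex_norm_square[of "cinner x y"] by (simp only: mult.commute)
    then show ?thesis by (simp only: of_real_divide)
  qed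
  also have "\<dots> = complex_of_real (cmod (cinner x y))"
    by (simp add: power2_eq_square)
  finally have "cinner x (cscale u y) = complex_of_real (cmod (cinner x y))" .
  then have "cmod (cinner x y) = Re (cinner x (cscale u y))" by simp
  also have "\<dots> \<le> norm x * norm (cscale u y)" by (rule re_cinner_le)
  finally show ?thesis using u by (simp add: norm_cscale)
qed

lemma cinner_ext: "(\<And>z. cinner z x = cinner z y) \<Longrightarrow> x = (y::'a::complex_hilbert)"
proof -
  assume h: "\<And>z. cinner z x = cinner z y"
  have "cinner (x - y) (x - y) = 0" using h[of "x - y"] by (simp add: cinner_diff_right)
  then show ?thesis by (simp add: cinner_self_eq_zero)
qed



lemma riesz:
  fixes f :: "'a::complex_hilbert \<Rightarrow> complex"
  assumes add: "\<And>x y. f (x + y) = f x + f y" and sc: "\<And>c x. f (cscale c x) = c * f x"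
    and bd: "\<And>x. cmod (f x) \<le> K * norm x"
  shows "\<exists>z. \<forall>x. f x = cinner z x"
proof (cases "\<forall>x. f x = 0")
  case True then show ?thesis by (intro exI[of _ 0]) simp
next
  case False
  then obtain x1 where x1: "f x1 \<noteq> 0" by auto
  define A where "A = {x. f x = 1}"
  have f0: "f 0 = 0" using add[of 0 0] by simp
  have fdiff: "f (x - y) = f x - f y" for x y
    using add[of "x - y" y] by simp
  have fR: "f (r *\<^sub>R x) = r * f x" for r x
    by (simp add: scaleR_cscale sc)
  have a1: "cscale (1 / f x1) x1 \<in> A" using x1 by (simp add: A_def sc)
  define N where "N = (\<lambda>x::'a. (norm x)\<^sup>2) ` A"
  define D where "D = Inf N"
  have Nne: "N \<noteq> {}" using a1 by (auto simp: N_def)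
  have bdd: "bdd_below N" unfolding N_def by (rule bdd_belowI[of _ 0]) auto
  have Dle: "D \<le> (norm a)\<^sup>2" if "a \<in> A" for a
    unfolding D_def using that bdd by (auto simp: N_def intro!: cInf_lower)
  have "\<exists>x\<in>A. (norm x)\<^sup>2 < D + inverse (real (Suc n))" for n
  proof -
    have "Inf N < D + inverse (real (Suc n))" by (simp add: D_def)
    then obtain v where "v \<in> N" "v < D + inverse (real (Suc n))"
      using cInf_less_iff[OF Nne bdd] by blast
    then show ?thesis by (auto simp: N_def)
  qed
  then obtain xs where xsA: "\<And>n. xs n \<in> A"
    and xsn: "\<And>n. (norm (xs n))\<^sup>2 < D + inverse (real (Suc n))" by metis
  have par: "(norm (a - b))\<^sup>2 \<le> 2 * (norm a)\<^sup>2 + 2 * (norm b)\<^sup>2 - 4 * D" if "a \<in> A" "b \<in> A" for a b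
  proof -
    have "(1/2) *\<^sub>R (a + b) \<in> A" using that by (simp add: A_def fR add)
    then have "D \<le> (norm ((1/2) *\<^sub>R (a + b)))\<^sup>2" by (rule Dle)
    also have "\<dots> = (norm (a + b))\<^sup>2 / 4" by (simp add: power2_eq_square)
    finally have "4 * D \<le> (norm (a + b))\<^sup>2" by simp
    then show ?thesis using norm_add_sq[of a b] norm_diff_sq[of a b] by simp
  qed
  have "Cauchy xs"
  proof (rule CauchyI)
    fix e :: real assume e: "0 < e"
    then have "0 < e\<^sup>2 / 4" by simp
    then obtain M where M: "inverse (real (Suc M)) < e\<^sup>2 / 4" using reals_Archimedean by blast
    have "norm (xs m - xs n) < e" if "m \<ge> M" "n \<ge> M" for m n
    proof -
      have im: "inverse (real (Suc m)) \<le> inverse (real (Suc M))"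
        using that by (simp add: le_imp_inverse_le)
      have i_n: "inverse (real (Suc n)) \<le> inverse (real (Suc M))"
        using that by (simp add: le_imp_inverse_le)
      have "(norm (xs m - xs n))\<^sup>2 \<le> 2 * (norm (xs m))\<^sup>2 + 2 * (norm (xs n))\<^sup>2 - 4 * D"
        using par xsA by blast
      also have "\<dots> < 2 * inverse (real (Suc m)) + 2 * inverse (real (Suc n))"
        using xsn[of m] xsn[of n] by simp
      also have "\<dots> < e\<^sup>2" using im i_n M by linarith
      finally show ?thesis using e by (simp add: power_less_imp_less_base)
    qed
    then show "\<exists>M. \<forall>m\<ge>M. \<forall>n\<ge>M. norm (xs m - xs n) < e" by blast
  qed
  then obtain z0 where lim: "xs \<longlonglongrightarrow> z0"
    using Cauchy_convergent_iff convergent_def by blast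
  have lim0: "(\<lambda>n. norm (xs n - z0)) \<longlonglongrightarrow> 0"
    using LIM_zero[OF lim] tendsto_norm_zero by blast
  have "(\<lambda>n. K * norm (xs n - z0)) \<longlonglongrightarrow> K * 0"
    by (intro tendsto_mult tendsto_const lim0)
  moreover have "cmod (f z0 - 1) \<le> K * norm (xs n - z0)" for n
  proof -
    have "f z0 - 1 = - f (xs n - z0)" using xsA[of n] by (simp add: fdiff A_def)
    then show ?thesis using bd[of "xs n - z0"] by simp
  qed
  ultimately have "cmod (f z0 - 1) \<le> K * 0"
    by (intro LIMSEQ_le_const[of "\<lambda>n. K * norm (xs n - z0)"]) auto
  then have fz0: "f z0 = 1" by simp
  then have z0A: "z0 \<in> A" by (simp add: A_def)
  have "(\<lambda>n. (norm (xs n))\<^sup>2) \<longlonglongrightarrow> (norm z0)\<^sup>2"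
    by (intro tendsto_intros lim)
  moreover have "(\<lambda>n. D + inverse (real (Suc n))) \<longlonglongrightarrow> D + 0"
    by (intro tendsto_intros LIMSEQ_inverse_real_of_nat)
  ultimately have z0D: "(norm z0)\<^sup>2 \<le> D + 0"
    by (rule LIMSEQ_le) (use xsn less_imp_le in blast)
  have orth: "cinner z0 w = 0" if fw: "f w = 0" for w
  proof (rule ccontr)
    define c where "c = cinner z0 w"
    assume "cinner z0 w \<noteq> 0"
    then have cpos: "0 < cmod c" by (simp add: c_def)
    define s where "s = 1 / ((norm w)\<^sup>2 + 1)"
    have spos: "0 < s" unfolding s_def by (simp add: add_nonneg_pos)
    have sw: "s * (norm w)\<^sup>2 < 1" by (simp add: s_def add_nonneg_pos)
    define t where "t = - complex_of_real s * cnj c"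
    have "z0 + cscale t w \<in> A" using fz0 fw by (simp add: A_def add sc)
    then have "D \<le> (norm (z0 + cscale t w))\<^sup>2" by (rule Dle)
    also have "\<dots> = (norm z0)\<^sup>2 + (norm (cscale t w))\<^sup>2 + 2 * Re (t * c)"
      by (simp add: norm_add_sq cinner_cscale_right c_def)
    also have "Re (t * c) = - s * (cmod c)\<^sup>2"
    proof -
      have "cnj c * c = complex_of_real ((cmod c)\<^sup>2)"
        using complex_norm_square[of c] by (simp only: mult.commute)
      then have "t * c = complex_of_real (- s * (cmod c)\<^sup>2)" by (simp add: t_def)
      then show ?thesis by simp
    qed
    also have "norm (cscale t w) = s * cmod c * norm w"
      using spos by (simp add: norm_cscale t_def norm_mult)
    finally have "D \<le> (norm z0)\<^sup>2 + (s * cmod c * norm w)\<^sup>2 + 2 * (- s * (cmod c)\<^sup>2)" .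
    with z0D have "0 \<le> s * (cmod c)\<^sup>2 * (s * (norm w)\<^sup>2 - 2)"
      by (simp add: power_mult_distrib algebra_simps power2_eq_square)
    moreover have "0 < s * (cmod c)\<^sup>2" using spos cpos by simp
    ultimately have "0 \<le> s * (norm w)\<^sup>2 - 2"
      by (simp add: zero_le_mult_iff)
    with sw show False by simp
  qed
  have z0ne: "z0 \<noteq> 0" using fz0 f0 by auto
  define z where "z = cscale (complex_of_real (1 / (norm z0)\<^sup>2)) z0"
  have "f x = cinner z x" for x
  proof -
    have "f (x - cscale (f x) z0) = 0" by (simp add: fdiff sc fz0)
    then have "cinner z0 (x - cscale (f x) z0) = 0" by (rule orth)
    then have "cinner z0 x = f x * complex_of_real ((norm z0)\<^sup>2)"
      by (simp add: cinner_diff_right cinner_cscale_right cinner_self)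
    then show ?thesis using z0ne
      by (simp add: z_def cinner_cscale_left)
  qed
  then show ?thesis by blast
qed

lemma adj_exists:
  fixes T :: "'a::complex_hilbert \<Rightarrow> 'a"
  assumes "bounded_clinear T"
  shows "\<exists>S. \<forall>x y. cinner (T x) y = cinner x (S y)"
proof -
  have bl: "bounded_linear T" and cl: "\<And>c x. T (cscale c x) = cscale c (T x)"
    using assms by (auto simp: bounded_clinear_def)
  obtain KT where KT: "\<And>x. norm (T x) \<le> norm x * KT"
    using bounded_linear.bounded[OF bl] by blast
  have "\<exists>z. \<forall>x. cinner y (T x) = cinner z x" for y
  proof (rule riesz)
    show "cinner y (T (x1 + x2)) = cinner y (T x1) + cinner y (T x2)" for x1 x2
      by (simp add: linear_add[OF bounded_linear.linear[OF bl]] cinner_add_right)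
    show "cinner y (T (cscale c x)) = c * cinner y (T x)" for c x
      by (simp add: cl cinner_cscale_right)
    show "cmod (cinner y (T x)) \<le> (norm y * KT) * norm x" for x
    proof -
      have "cmod (cinner y (T x)) \<le> norm y * norm (T x)" by (rule cauchy_schwarz)
      also have "\<dots> \<le> norm y * (norm x * KT)" by (rule mult_left_mono[OF KT]) simp
      finally show ?thesis by (simp add: mult_ac)
    qed
  qed
  then obtain S where S: "\<And>y x. cinner y (T x) = cinner (S y) x" by metis
  have "cinner (T x) y = cinner x (S y)" for x y
    by (metis S cinner_conj)
  then show ?thesis by blast
qed

lemma adj_prop:
  fixes T :: "'a::complex_hilbert \<Rightarrow> 'a"
  assumes "bounded_clinear T"
  shows "cinner (T x) y = cinner x (adj T y)"
proof -
  obtain S where S: "\<And>x y. cinner (T x) y = cinner x (S y)"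
    using adj_exists[OF assms] by blast
  have "adj T = S" unfolding adj_def
  proof (rule the_equality)
    show "\<forall>x y. cinner (T x) y = cinner x (S y)" using S by blast
    fix S' assume h: "\<forall>x y. cinner (T x) y = cinner x (S' y)"
    show "S' = S"
    proof
      fix y show "S' y = S y" by (rule cinner_ext) (metis h S)
    qed
  qed
  then show ?thesis using S by simp
qed

lemma norm_eq_from_cinner:
  fixes x y :: "'a::complex_hilbert"
  assumes "cinner x x = cinner y y" shows "norm x = norm y"
proof -
  have "complex_of_real ((norm x)\<^sup>2) = complex_of_real ((norm y)\<^sup>2)"
    using assms by (simp only: cinner_self)
  then have "(norm x)\<^sup>2 = (norm y)\<^sup>2" by (simp only: of_real_eq_iff)
  then show ?thesis by (simp add: power2_eq_iff_nonneg)
qed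

lemma unitary_props:
  fixes M :: "('a::complex_hilbert \<Rightarrow> 'a) set"
  assumes vn: "von_neumann_algebra M" and U: "U \<in> unitaries M"
  shows "bounded_clinear U" "bounded_clinear (adj U)" "adj U (U x) = x" "U (adj U x) = x"
    "norm (U x) = norm x" "norm (adj U x) = norm x" "adj U \<in> M"
proof -
  have UM: "U \<in> M" and e1: "adj U \<circ> U = id" and e2: "U \<circ> adj U = id"
    using U by (auto simp: unitaries_def)
  show bU: "bounded_clinear U" using vn UM by (auto simp: von_neumann_algebra_def)
  show "adj U \<in> M" using vn UM by (auto simp: von_neumann_algebra_def)
  then show "bounded_clinear (adj U)" using vn by (auto simp: von_neumann_algebra_def)
  show i1: "adj U (U x) = x" for x using e1 by (metis comp_apply id_apply)
  show i2: "U (adj U x) = x" for x using e2 by (metis comp_apply id_apply)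
  show "norm (U x) = norm x"
    by (rule norm_eq_from_cinner) (simp add: adj_prop[OF bU] i1)
  show "norm (adj U x) = norm x"
    by (rule norm_eq_from_cinner) (metis adj_prop[OF bU] i2)
qed

lemma symmetry_props:
  fixes M :: "('a::complex_hilbert \<Rightarrow> 'a) set"
  assumes vn: "von_neumann_algebra M" and S: "S \<in> symmetries M"
  shows "bounded_clinear S" "S (S x) = x" "norm (S x) = norm x"
proof -
  have U: "S \<in> unitaries M" and a: "adj S = S" using S by (auto simp: symmetries_def)
  show "bounded_clinear S" "norm (S x) = norm x" using unitary_props[OF vn U] by auto
  show "S (S x) = x" using unitary_props(3)[OF vn U, of x] a by simp
qed



lemma perturb:
  fixes T E R :: "'a::complex_hilbert \<Rightarrow> 'a"
  assumes T: "bounded_linear T" and E: "bounded_linear E" and R: "bounded_linear R"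
    and RT: "\<And>x. R (T x) = x" and TR: "\<And>y. T (R y) = y"
    and Rb: "\<And>y. norm (R y) \<le> r * norm y" and Eb: "\<And>x. norm (E x) \<le> e * norm x"
    and r0: "0 \<le> r" and e0: "0 \<le> e" and er: "e * r < 1"
  shows "\<exists>R'. bounded_linear R' \<and> (\<forall>x. R' (T x + E x) = x) \<and> (\<forall>y. T (R' y) + E (R' y) = y)
           \<and> (\<forall>y. norm (R' y) \<le> (r / (1 - e * r)) * norm y)"
proof -
  interpret T: bounded_linear T by fact
  interpret E: bounded_linear E by fact
  interpret R: bounded_linear R by fact
  have ex1: "\<exists>!x. R y - R (E x) = x" for y
  proof (rule banach_fix_type[of "e * r"])
    show "0 \<le> e * r" using e0 r0 by simp
    show "e * r < 1" by fact
    show "\<forall>x x'. dist (R y - R (E x)) (R y - R (E x')) \<le> e * r * dist x x'"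
    proof (intro allI)
      fix x x'
      have "dist (R y - R (E x)) (R y - R (E x')) = norm (R (E (x' - x)))"
        by (simp add: dist_norm R.diff E.diff norm_minus_commute)
      also have "\<dots> \<le> r * norm (E (x' - x))" by (rule Rb)
      also have "\<dots> \<le> r * (e * norm (x' - x))" by (rule mult_left_mono[OF Eb r0])
      finally show "dist (R y - R (E x)) (R y - R (E x')) \<le> e * r * dist x x'"
        by (simp add: dist_norm norm_minus_commute mult_ac)
    qed
  qed
  define R' where "R' y = (THE x. R y - R (E x) = x)" for y
  have R'fix: "R y - R (E (R' y)) = R' y" for y
    unfolding R'_def by (rule theI'[OF ex1])
  have uniq: "R y - R (E x) = x \<Longrightarrow> R' y = x" for x y
    unfolding R'_def by (rule the1_equality[OF ex1])
  have sol: "T (R' y) + E (R' y) = y" for y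
  proof -
    have "T (R' y) = T (R y - R (E (R' y)))" using R'fix[of y] by simp
    also have "\<dots> = y - E (R' y)" by (simp add: T.diff TR)
    finally show ?thesis by simp
  qed
  have inv: "R' (T x + E x) = x" for x
    by (rule uniq) (simp add: R.add RT)
  have add: "R' (a + b) = R' a + R' b" for a b
  proof -
    have "T (R' a + R' b) + E (R' a + R' b) = a + b"
      using sol[of a] sol[of b] by (simp add: T.add E.add algebra_simps)
    then show ?thesis using inv[of "R' a + R' b"] by simp
  qed
  have scl: "R' (c *\<^sub>R a) = c *\<^sub>R R' a" for c a
  proof -
    have "T (c *\<^sub>R R' a) + E (c *\<^sub>R R' a) = c *\<^sub>R a"
      using sol[of a] by (simp add: T.scaleR E.scaleR scaleR_add_right[symmetric])
    then show ?thesis using inv[of "c *\<^sub>R R' a"] by simp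
  qed
  have bnd: "norm (R' y) \<le> (r / (1 - e * r)) * norm y" for y
  proof -
    have "norm (R' y) \<le> norm (R y) + norm (R (E (R' y)))"
      using R'fix[of y] norm_triangle_ineq4[of "R y" "R (E (R' y))"] by simp
    also have "\<dots> \<le> r * norm y + r * (e * norm (R' y))"
      using Rb[of y] Rb[of "E (R' y)"] mult_left_mono[OF Eb[of "R' y"] r0] by linarith
    finally have "(1 - e * r) * norm (R' y) \<le> r * norm y" by (simp add: algebra_simps)
    then show ?thesis using er by (simp add: field_simps)
  qed
  have "bounded_linear R'"
    by (rule bounded_linear_intro[where K = "r / (1 - e * r)"]) (use add scl bnd in \<open>auto simp: mult.commute\<close>)
  then show ?thesis using inv sol bnd by blast
qed

lemma bl_cscale: "bounded_linear (cscale z :: 'a::complex_hilbert \<Rightarrow> 'a)"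
  by (rule bounded_linear_intro[where K = "cmod z"])
     (auto simp: cscale_add_right cscale_scaleR norm_cscale mult.commute)

lemma bclin_diff:
  fixes U :: "'a::complex_hilbert \<Rightarrow> 'a"
  assumes "bounded_clinear U"
  shows "bounded_clinear (\<lambda>x. U x - cscale z x)"
proof -
  have bl: "bounded_linear U" and cl: "\<And>c x. U (cscale c x) = cscale c (U x)"
    using assms by (auto simp: bounded_clinear_def)
  show ?thesis unfolding bounded_clinear_def
  proof
    show "bounded_linear (\<lambda>x. U x - cscale z x)"
      by (intro bounded_linear_sub bl bl_cscale)
    show "\<forall>c x. U (cscale c x) - cscale z (cscale c x) = cscale c (U x - cscale z x)"
      by (simp add: cl cscale_cscale cscale_diff_right mult.commute)
  qed
qed

lemma inv_in_M:
  fixes M :: "('a::complex_hilbert \<Rightarrow> 'a) set"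
  assumes vn: "von_neumann_algebra M" and TM: "T \<in> M" and bR: "bounded_clinear R"
    and RT: "\<And>x. R (T x) = x" and TR: "\<And>y. T (R y) = y"
  shows "R \<in> M"
proof -
  have "R \<in> commutant (commutant M)"
    unfolding commutant_def
  proof (intro CollectI conjI ballI bR)
    fix S assume "S \<in> {T. bounded_clinear T \<and> (\<forall>S\<in>M. T \<circ> S = S \<circ> T)}"
    then have "S \<circ> T = T \<circ> S" using TM by auto
    then have ST: "S (T x) = T (S x)" for x by (metis comp_apply)
    show "R \<circ> S = S \<circ> R"
    proof
      fix y
      have "R (S y) = R (S (T (R y)))" by (simp add: TR)
      also have "\<dots> = S (R y)" by (simp add: ST RT)
      finally show "(R \<circ> S) y = (S \<circ> R) y" by simp
    qed
  qed
  then show ?thesis using vn by (simp add: von_neumann_algebra_def)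
qed

lemma diff_in_M:
  fixes M :: "('a::complex_hilbert \<Rightarrow> 'a) set"
  assumes vn: "von_neumann_algebra M" and VM: "V \<in> M"
  shows "(\<lambda>x. V x - cscale z x) \<in> M"
proof -
  have bV: "bounded_clinear V" using vn VM by (auto simp: von_neumann_algebra_def)
  have "(\<lambda>x. V x - cscale z x) \<in> commutant (commutant M)"
    unfolding commutant_def
  proof (intro CollectI conjI ballI bclin_diff[OF bV])
    fix S assume S: "S \<in> {T. bounded_clinear T \<and> (\<forall>S\<in>M. T \<circ> S = S \<circ> T)}"
    then have "S \<circ> V = V \<circ> S" using VM by auto
    then have SV: "S (V x) = V (S x)" for x by (metis comp_apply)
    have bS: "bounded_linear S" and cS: "\<And>c x. S (cscale c x) = cscale c (S x)"
      using S by (auto simp: bounded_clinear_def)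
    show "(\<lambda>x. V x - cscale z x) \<circ> S = S \<circ> (\<lambda>x. V x - cscale z x)"
      by (rule ext) (simp add: SV cS linear_diff[OF bounded_linear.linear[OF bS]])
  qed
  then show ?thesis using vn by (simp add: von_neumann_algebra_def)
qed

lemma notspec:
  fixes M :: "('a::complex_hilbert \<Rightarrow> 'a) set"
  assumes vn: "von_neumann_algebra M" and VM: "V \<in> M" and bR: "bounded_linear R"
    and RF: "\<And>x. R (V x - cscale z x) = x" and FR: "\<And>y. V (R y) - cscale z (R y) = y"
  shows "z \<notin> spectrum_in M V"
proof -
  let ?F = "\<lambda>x. V x - cscale z x"
  have FM: "?F \<in> M" by (rule diff_in_M[OF vn VM])
  have bF: "bounded_clinear ?F" using vn FM by (auto simp: von_neumann_algebra_def)
  have cF: "?F (cscale c x) = cscale c (?F x)" for c x using bF by (simp add: bounded_clinear_def)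
  have cR: "R (cscale c y) = cscale c (R y)" for c y
  proof -
    have "R (cscale c y) = R (cscale c (?F (R y)))" by (simp add: FR)
    also have "\<dots> = R (?F (cscale c (R y)))" by (simp only: cF)
    also have "\<dots> = cscale c (R y)" by (rule RF)
    finally show ?thesis .
  qed
  have "bounded_clinear R" using bR cR by (simp add: bounded_clinear_def)
  then have RM: "R \<in> M" by (rule inv_in_M[OF vn FM _ RF FR])
  have "R \<circ> ?F = id" "?F \<circ> R = id" using RF FR by (auto simp: fun_eq_iff)
  then show ?thesis using RM by (auto simp: spectrum_in_def)
qed

lemma unit_spec:
  fixes M :: "('a::complex_hilbert \<Rightarrow> 'a) set"
  assumes vn: "von_neumann_algebra M" and V: "V \<in> unitaries M" and z: "cmod z \<noteq> 1"
  shows "z \<notin> spectrum_in M V"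
proof -
  note up = unitary_props[OF vn V]
  have VM: "V \<in> M" using V by (simp add: unitaries_def)
  have bV: "bounded_linear V" using up(1) by (simp add: bounded_clinear_def)
  have bA: "bounded_linear (adj V)" using up(2) by (simp add: bounded_clinear_def)
  have "\<exists>R'. bounded_linear R' \<and> (\<forall>x. R' (V x - cscale z x) = x) \<and> (\<forall>y. V (R' y) - cscale z (R' y) = y)"
  proof (cases "cmod z < 1")
    case True
    obtain R' where R': "bounded_linear R'" "\<forall>x. R' (V x + cscale (-z) x) = x"
      "\<forall>y. V (R' y) + cscale (-z) (R' y) = y"
      using perturb[OF bV bl_cscale bA up(3) up(4), of 1 "-z" "cmod z"] True
      by (auto simp: up(6) norm_cscale)
    then show ?thesis by (intro exI[of _ R']) (simp add: cscale_minus_left)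
  next
    case False
    with z have z1: "cmod z > 1" by simp
    then have z0: "z \<noteq> 0" by auto
    have i1: "cscale (- 1 / z) (cscale (- z) x) = x" for x
      using z0 by (simp add: cscale_cscale)
    have i2: "cscale (- z) (cscale (- 1 / z) x) = x" for x
      using z0 by (simp add: cscale_cscale)
    have nb: "norm (cscale (- 1 / z) y) \<le> (1 / cmod z) * norm y" for y
      by (simp add: norm_cscale norm_divide)
    obtain R' where R': "bounded_linear R'" "\<forall>x. R' (cscale (-z) x + V x) = x"
      "\<forall>y. cscale (-z) (R' y) + V (R' y) = y"
    proof -
      have lt: "1 * (1 / cmod z) < 1" using z1 by (simp add: divide_less_eq)
      show ?thesis using perturb[OF bl_cscale bV bl_cscale i1 i2 nb, of 1, OF _ _ _ lt] z1 that
        by (auto simp: up(5))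
    qed
    then show ?thesis by (intro exI[of _ R']) (simp add: cscale_minus_left algebra_simps)
  qed
  then show ?thesis using notspec[OF vn VM] by blast
qed



definition ee :: "real \<Rightarrow> complex" where
  "ee a = exp (2 * of_real pi * \<i> * of_real a)"

lemma ee_alt: "ee a = exp (\<i> * of_real (2 * pi * a))"
  by (simp add: ee_def mult_ac)

lemma ee_norm: "cmod (ee a) = 1"
  by (simp add: ee_alt)

lemma ee_eq: "ee a = ee b \<longleftrightarrow> (\<exists>n::int. a = b + of_int n)"
proof
  assume "ee a = ee b"
  then obtain n :: int where h: "2 * of_real pi * \<i> * of_real a = 2 * of_real pi * \<i> * of_real b + of_int (2 * n) * pi * \<i>"
    unfolding ee_def exp_eq by blast
  have "Im (2 * of_real pi * \<i> * of_real a) = Im (2 * of_real pi * \<i> * of_real b + of_int (2 * n) * pi * \<i>)"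
    using h by simp
  then have "2 * pi * a = 2 * pi * b + 2 * n * pi" by simp
  then have "pi * (2 * (a - (b + n))) = 0" by (simp add: algebra_simps)
  then have "a = b + n" by simp
  then show "\<exists>n::int. a = b + of_int n" by blast
next
  assume "\<exists>n::int. a = b + of_int n"
  then obtain n :: int where "a = b + of_int n" by blast
  then show "ee a = ee b" unfolding ee_def exp_eq
    by (intro exI[of _ n]) (simp add: algebra_simps)
qed

lemma ee_surj: "cmod z = 1 \<Longrightarrow> \<exists>a. z = ee a"
proof -
  assume "cmod z = 1"
  then obtain t where "z = Complex (cos t) (sin t)" using complex_unimodular_polar by blast
  then have "z = cis t" by (simp add: complex_eq_iff)
  also have "\<dots> = ee (t / (2 * pi))" by (simp add: cis_conv_exp ee_alt)
  finally show ?thesis by blast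
qed

lemma arc_ee: "arc k = ee ` {(real k - 1) / 4 <..< real k / 4}"
  unfolding arc_def ee_def by auto

lemma circ_minus_arc: "{z. cmod z = 1} - arc k = ee ` {real k / 4 .. (real k + 3) / 4}"
proof
  show "{z. cmod z = 1} - arc k \<subseteq> ee ` {real k / 4 .. (real k + 3) / 4}"
  proof
    fix z assume z: "z \<in> {z. cmod z = 1} - arc k"
    then obtain a where a: "z = ee a" using ee_surj by blast
    define n where "n = \<lceil>real k / 4 - a\<rceil>"
    define b where "b = a + of_int n"
    have b1: "real k / 4 \<le> b" unfolding b_def n_def by linarith
    have b2: "b < real k / 4 + 1" unfolding b_def n_def by linarith
    have zb: "z = ee b" using a ee_eq[of b a] by (auto simp: b_def)
    have "b \<le> (real k + 3) / 4"
    proof (rule ccontr)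
      assume "\<not> b \<le> (real k + 3) / 4"
      then have "b - 1 \<in> {(real k - 1) / 4 <..< real k / 4}" using b2 by auto
      moreover have "ee (b - 1) = z" using zb ee_eq[of "b - 1" b]
        by (metis add_uminus_conv_diff of_int_1 of_int_minus)
      ultimately have "z \<in> arc k" by (auto simp: arc_ee)
      then show False using z by blast
    qed
    then show "z \<in> ee ` {real k / 4 .. (real k + 3) / 4}" using b1 zb by auto
  qed
next
  show "ee ` {real k / 4 .. (real k + 3) / 4} \<subseteq> {z. cmod z = 1} - arc k"
  proof
    fix z assume "z \<in> ee ` {real k / 4 .. (real k + 3) / 4}"
    then obtain b where b: "b \<in> {real k / 4 .. (real k + 3) / 4}" "z = ee b" by blast
    have "z \<notin> arc k"
    proof
      assume "z \<in> arc k"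
      then obtain a where a: "a \<in> {(real k - 1) / 4 <..< real k / 4}" "z = ee a"
        by (auto simp: arc_ee)
      then obtain n :: int where "b = a + of_int n" using b ee_eq by metis
      moreover have "0 < b - a" "b - a < 1" using a b by auto
      ultimately show False by auto
    qed
    then show "z \<in> {z. cmod z = 1} - arc k" using b ee_norm by auto
  qed
qed

lemma compact_circ_minus_arc: "compact ({z. cmod z = 1} - arc k)"
  unfolding circ_minus_arc
  by (intro compact_continuous_image compact_Icc) (auto simp: ee_def intro!: continuous_intros)



lemma three_sym_contra:
  fixes A B C :: "'a::complex_hilbert \<Rightarrow> 'a" and w :: "'a"
  assumes Ad: "\<And>x y. A (x - y) = A x - A y" and Ac: "\<And>c x. A (cscale c x) = cscale c (A x)"
    and Bd: "\<And>x y. B (x - y) = B x - B y" and Bc: "\<And>c x. B (cscale c x) = cscale c (B x)"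
    and AA: "\<And>x. A (A x) = x" and BB: "\<And>x. B (B x) = x" and CC: "\<And>x. C (C x) = x"
    and An: "\<And>x. norm (A x) = norm x" and Bn: "\<And>x. norm (B x) = norm x" and Cn: "\<And>x. norm (C x) = norm x"
    and l: "cnj l * l = 1"
    and H: "\<And>x. norm (A (B (C x)) - cscale l x) \<le> \<epsilon> * norm x"
  shows "cmod ((cnj l)\<^sup>2 - cnj ((cnj l)\<^sup>2)) * norm w \<le> 4 * \<epsilon> * norm w"
proof -
  define \<mu> where "\<mu> = (cnj l)\<^sup>2"
  have lm: "cmod l = 1"
  proof -
    have "cmod (cnj l * l) = 1" using l by simp
    then have "cmod l * cmod l = 1" by (simp add: norm_mult)
    then show ?thesis by (metis abs_norm_cancel abs_square_eq_1 power2_eq_square)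
  qed
  have lc: "l * cnj l = 1" using l by (simp add: mult.commute)
  have mu: "cnj \<mu> * \<mu> = 1" unfolding \<mu>_def using lc by (simp add: power2_eq_square mult_ac)
  have mum: "cmod \<mu> = 1" unfolding \<mu>_def using lm by (simp add: norm_power)
  have S1: "norm (B (C x) - cscale l (A x)) \<le> \<epsilon> * norm x" for x
  proof -
    have "B (C x) - cscale l (A x) = A (A (B (C x)) - cscale l x)" by (simp add: Ad Ac AA)
    then show ?thesis using H[of x] An by simp
  qed
  have S2: "norm (C (B y) - cscale (cnj l) (A y)) \<le> \<epsilon> * norm y" for y
  proof -
    have "norm (B (C (C (B y))) - cscale l (A (C (B y)))) \<le> \<epsilon> * norm (C (B y))" by (rule S1)
    then have h: "norm (y - cscale l (A (C (B y)))) \<le> \<epsilon> * norm y" by (simp add: CC BB Cn Bn)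
    have "C (B y) - cscale (cnj l) (A y) = cscale (- cnj l) (A (y - cscale l (A (C (B y)))))"
      by (simp add: Ad Ac AA cscale_diff_right cscale_cscale cscale_minus_left l)
    then show ?thesis using h by (simp add: norm_cscale An lm)
  qed
  have S3: "norm (C (B y) - cscale l (B (A (B y)))) \<le> \<epsilon> * norm y" for y
  proof -
    have "C (B y) - cscale l (B (A (B y))) = B (B (C (B y)) - cscale l (A (B y)))"
      by (simp add: Bd Bc BB)
    then show ?thesis using S1[of "B y"] Bn by simp
  qed
  have S4: "norm (cscale l (B (A (B y))) - cscale (cnj l) (A y)) \<le> 2 * \<epsilon> * norm y" for y
  proof -
    have "cscale l (B (A (B y))) - cscale (cnj l) (A y)
        = (C (B y) - cscale (cnj l) (A y)) - (C (B y) - cscale l (B (A (B y))))" by simp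
    then have "norm (cscale l (B (A (B y))) - cscale (cnj l) (A y))
        \<le> norm (C (B y) - cscale (cnj l) (A y)) + norm (C (B y) - cscale l (B (A (B y))))"
      by (metis norm_triangle_ineq4)
    then show ?thesis using S2[of y] S3[of y] by simp
  qed
  have S5: "norm (B (A (B (A z))) - cscale \<mu> z) \<le> 2 * \<epsilon> * norm z" for z
  proof -
    have "B (A (B (A z))) - cscale \<mu> z
        = cscale (cnj l) (cscale l (B (A (B (A z)))) - cscale (cnj l) (A (A z)))"
      by (simp add: AA cscale_diff_right cscale_cscale l \<mu>_def power2_eq_square)
    then show ?thesis using S4[of "A z"] An by (simp add: norm_cscale lm)
  qed
  have S6: "norm (A (B (A (B z))) - cscale \<mu> z) \<le> 2 * \<epsilon> * norm z" for z
  proof -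
    have "A (B (A (B z))) - cscale \<mu> z = B (B (A (B (A (B z)))) - cscale \<mu> (B z))"
      by (simp add: Bd Bc BB)
    then show ?thesis using S5[of "B z"] Bn by simp
  qed
  have S7: "norm (cscale (cnj \<mu>) w - A (B (A (B w)))) \<le> 2 * \<epsilon> * norm w"
  proof -
    have "norm (B (A (B (A (A (B (A (B w))))))) - cscale \<mu> (A (B (A (B w)))))
          \<le> 2 * \<epsilon> * norm (A (B (A (B w))))" by (rule S5)
    then have h: "norm (w - cscale \<mu> (A (B (A (B w))))) \<le> 2 * \<epsilon> * norm w"
      by (simp add: AA BB An Bn)
    have "cscale (cnj \<mu>) w - A (B (A (B w))) = cscale (cnj \<mu>) (w - cscale \<mu> (A (B (A (B w)))))"
      by (simp add: cscale_diff_right cscale_cscale mu)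
    then show ?thesis using h by (simp add: norm_cscale mum)
  qed
  have "cscale (\<mu> - cnj \<mu>) w = (A (B (A (B w))) - cscale (cnj \<mu>) w) - (A (B (A (B w))) - cscale \<mu> w)"
    by (simp add: cscale_diff_left)
  then have "norm (cscale (\<mu> - cnj \<mu>) w) \<le> norm (A (B (A (B w))) - cscale (cnj \<mu>) w) + norm (A (B (A (B w))) - cscale \<mu> w)"
    by (metis norm_triangle_ineq4)
  also have "\<dots> \<le> 2 * \<epsilon> * norm w + 2 * \<epsilon> * norm w"
    using S6[of w] S7 by (simp add: norm_minus_commute)
  finally show ?thesis by (simp add: norm_cscale \<mu>_def)
qed



lemma scalar_in_M:
  fixes M :: "('a::complex_hilbert \<Rightarrow> 'a) set"
  assumes vn: "von_neumann_algebra M"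
  shows "cscale l \<in> M"
proof -
  have bc: "bounded_clinear (cscale l :: 'a \<Rightarrow> 'a)"
    unfolding bounded_clinear_def using bl_cscale by (simp add: cscale_cscale mult.commute)
  have "cscale l \<in> commutant (commutant M)"
    unfolding commutant_def
  proof (intro CollectI conjI ballI bc)
    fix S assume "S \<in> {T. bounded_clinear T \<and> (\<forall>S\<in>M. T \<circ> S = S \<circ> T)}"
    then have "\<And>c x. S (cscale c x) = cscale c (S x)" by (auto simp: bounded_clinear_def)
    then show "cscale l \<circ> S = S \<circ> cscale l" by (auto simp: fun_eq_iff)
  qed
  then show ?thesis using vn by (simp add: von_neumann_algebra_def)
qed

lemma scalar_unitary:
  fixes M :: "('a::complex_hilbert \<Rightarrow> 'a) set"
  assumes vn: "von_neumann_algebra M" and l: "cnj l * l = 1"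
  shows "cscale l \<in> unitaries M"
proof -
  have LM: "cscale l \<in> M" by (rule scalar_in_M[OF vn])
  have bc: "bounded_clinear (cscale l :: 'a \<Rightarrow> 'a)"
    using vn LM by (auto simp: von_neumann_algebra_def)
  have adjL: "adj (cscale l) y = cscale (cnj l) y" for y :: 'a
  proof (rule cinner_ext)
    fix x
    have "cinner x (adj (cscale l) y) = cinner (cscale l x) y" by (rule adj_prop[OF bc, symmetric])
    also have "\<dots> = cinner x (cscale (cnj l) y)" by (simp add: cinner_cscale_left cinner_cscale_right)
    finally show "cinner x (adj (cscale l) y) = cinner x (cscale (cnj l) y)" .
  qed
  have lc: "l * cnj l = 1" using l by (simp add: mult.commute)
  show ?thesis unfolding unitaries_def
    using LM by (auto simp: fun_eq_iff adjL cscale_cscale l lc)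
qed

lemma not_dense:
  fixes M :: "('a::complex_hilbert \<Rightarrow> 'a) set"
  assumes vn: "von_neumann_algebra M" and nz: "\<exists>x::'a. x \<noteq> 0"
  shows "norm_closure (sym_cube M) \<noteq> unitaries M"
proof
  assume eq: "norm_closure (sym_cube M) = unitaries M"
  define l where "l = Complex (sqrt 2 / 2) (sqrt 2 / 2)"
  have s2: "(sqrt 2 / 2)\<^sup>2 = (1/2::real)" by (simp add: power_divide)
  have l1: "cnj l * l = 1"
    by (simp add: l_def complex_eq_iff power2_eq_square[symmetric] s2)
  have l2: "(cnj l)\<^sup>2 = - \<i>"
    by (simp add: l_def complex_eq_iff power2_eq_square algebra_simps)
  have "cscale l \<in> unitaries M" by (rule scalar_unitary[OF vn l1])
  then have "cscale l \<in> norm_closure (sym_cube M)" using eq by simp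
  then obtain U where U: "U \<in> sym_cube M" and Ul: "onorm (\<lambda>x. U x - cscale l x) < 1/4"
  proof -
    have "\<forall>e>0. \<exists>S\<in>sym_cube M. onorm (\<lambda>x. S x - cscale l x) < e"
      using \<open>cscale l \<in> norm_closure (sym_cube M)\<close> unfolding norm_closure_def by blast
    then have "\<exists>S\<in>sym_cube M. onorm (\<lambda>x. S x - cscale l x) < 1/4"
      by (elim allE[of _ "1/4"]) simp
    then show ?thesis using that by blast
  qed
  then obtain A B C where A: "A \<in> symmetries M" and B: "B \<in> symmetries M" and C: "C \<in> symmetries M"
    and UABC: "U = A \<circ> B \<circ> C" by (auto simp: sym_cube_def)
  have Uu: "U \<in> unitaries M" using U by (simp add: sym_cube_def)
  have bU: "bounded_linear U" using unitary_props(1)[OF vn Uu] by (simp add: bounded_clinear_def)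
  have bD: "bounded_linear (\<lambda>x. U x - cscale l x)" by (intro bounded_linear_sub bU bl_cscale)
  define \<epsilon> where "\<epsilon> = onorm (\<lambda>x. U x - cscale l x)"
  have H: "norm (A (B (C x)) - cscale l x) \<le> \<epsilon> * norm x" for x
    using onorm[OF bD, of x] by (simp add: \<epsilon>_def UABC)
  have bA: "bounded_clinear A" and bB: "bounded_clinear B"
    using symmetry_props(1) A B vn by blast+
  obtain w :: 'a where w: "w \<noteq> 0" using nz by blast
  have "cmod ((cnj l)\<^sup>2 - cnj ((cnj l)\<^sup>2)) * norm w \<le> 4 * \<epsilon> * norm w"
  proof (rule three_sym_contra[where A = A and B = B and C = C])
    show "A (x - y) = A x - A y" "B (x - y) = B x - B y" for x y
      using bA bB by (simp_all add: bounded_clinear_def linear_diff bounded_linear.linear)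
    show "A (cscale c x) = cscale c (A x)" "B (cscale c x) = cscale c (B x)" for c x
      using bA bB by (simp_all add: bounded_clinear_def)
    show "A (A x) = x" "B (B x) = x" "C (C x) = x" for x
      using symmetry_props(2) A B C vn by blast+
    show "norm (A x) = norm x" "norm (B x) = norm x" "norm (C x) = norm x" for x
      using symmetry_props(3) A B C vn by blast+
    show "cnj l * l = 1" by (rule l1)
    show "norm (A (B (C x)) - cscale l x) \<le> \<epsilon> * norm x" for x by (rule H)
  qed
  then have "2 * norm w \<le> 4 * \<epsilon> * norm w" by (simp add: l2)
  moreover have "0 < norm w" using w by simp
  ultimately have "2 \<le> 4 * \<epsilon>" by simp
  then show False using Ul by (simp add: \<epsilon>_def)
qed



definition good :: "('a::complex_hilbert \<Rightarrow> 'a) \<Rightarrow> complex \<Rightarrow> real \<Rightarrow> bool" where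
  "good U z r \<longleftrightarrow> (\<exists>R. bounded_linear R \<and> (\<forall>x. R (U x - cscale z x) = x)
      \<and> (\<forall>y. U (R y) - cscale z (R y) = y) \<and> (\<forall>y. norm (R y) \<le> r * norm y))"

lemma good_mono: "good U z r \<Longrightarrow> r \<le> r' \<Longrightarrow> good U z r'"
  unfolding good_def by (meson mult_right_mono norm_ge_zero order_trans)

lemma good_local:
  fixes U :: "'a::complex_hilbert \<Rightarrow> 'a"
  assumes bU: "bounded_linear U" and g: "good U z r" and r: "0 < r" and wz: "cmod (z - w) * r \<le> 1/2"
  shows "good U w (2 * r)"
proof -
  obtain R where R: "bounded_linear R" "\<And>x. R (U x - cscale z x) = x"
      "\<And>y. U (R y) - cscale z (R y) = y" "\<And>y. norm (R y) \<le> r * norm y"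
    using g unfolding good_def by blast
  have bT: "bounded_linear (\<lambda>x. U x - cscale z x)" by (intro bounded_linear_sub bU bl_cscale)
  have nb: "norm (cscale (z - w) x) \<le> cmod (z - w) * norm x" for x by (simp add: norm_cscale)
  have lt: "cmod (z - w) * r < 1" using wz by simp
  obtain R' where R': "bounded_linear R'" "\<forall>x. R' ((U x - cscale z x) + cscale (z - w) x) = x"
    "\<forall>y. (U (R' y) - cscale z (R' y)) + cscale (z - w) (R' y) = y"
    "\<forall>y. norm (R' y) \<le> (r / (1 - cmod (z - w) * r)) * norm y"
    using perturb[OF bT bl_cscale R(1) R(2) R(3) R(4) nb less_imp_le[OF r] norm_ge_zero lt] by blast
  have "r / (1 - cmod (z - w) * r) \<le> 2 * r" using wz r by (simp add: field_simps)
  then have "norm (R' y) \<le> 2 * r * norm y" for y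
    using R'(4) by (meson mult_right_mono norm_ge_zero order_trans)
  moreover have eqs: "U x - cscale z x + cscale (z - w) x = U x - cscale w x" for x :: 'a
    by (simp add: cscale_diff_left)
  moreover have "R' (U x - cscale w x) = x" for x using R'(2) eqs by metis
  moreover have "U (R' y) - cscale w (R' y) = y" for y using R'(3) eqs by metis
  ultimately show ?thesis unfolding good_def using R'(1) by blast
qed

lemma open_part:
  fixes M :: "('a::complex_hilbert \<Rightarrow> 'a) set"
  assumes vn: "von_neumann_algebra M"
  shows "norm_open_in (unitaries M)
           {U\<in>unitaries M. \<exists>k\<in>{1,2,3,4}. spectrum_in M U \<subseteq> arc k}"
  unfolding norm_open_in_def
proof (intro conjI ballI)
  show "{U\<in>unitaries M. \<exists>k\<in>{1,2,3,4}. spectrum_in M U \<subseteq> arc k} \<subseteq> unitaries M" by blast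
next
  fix U assume "U \<in> {U\<in>unitaries M. \<exists>k\<in>{1,2,3,4}. spectrum_in M U \<subseteq> arc k}"
  then obtain k where Uu: "U \<in> unitaries M" and k: "k \<in> {1,2,3,4}" and sp: "spectrum_in M U \<subseteq> arc k"
    by blast
  have UM: "U \<in> M" using Uu by (simp add: unitaries_def)
  have bU: "bounded_linear U" using unitary_props(1)[OF vn Uu] by (simp add: bounded_clinear_def)
  define K where "K = {z. cmod z = 1} - arc k"
  have cK: "compact K" unfolding K_def by (rule compact_circ_minus_arc)
  have "\<exists>r>0. good U z r" if "z \<in> K" for z
  proof -
    have "z \<notin> spectrum_in M U" using that sp K_def by blast
    then obtain S where S: "S \<in> M" "S \<circ> (\<lambda>x. U x - cscale z x) = id" "(\<lambda>x. U x - cscale z x) \<circ> S = id"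
      unfolding spectrum_in_def by blast
    have bS: "bounded_linear S" using vn S(1) by (auto simp: von_neumann_algebra_def bounded_clinear_def)
    obtain r where r: "r > 0" "\<And>y. norm (S y) \<le> norm y * r"
      using bounded_linear.pos_bounded[OF bS] by blast
    have "good U z r" unfolding good_def
    proof (intro exI[of _ S] conjI allI bS)
      show "S (U x - cscale z x) = x" for x using S(2) by (metis comp_apply id_apply)
      show "U (S y) - cscale z (S y) = y" for y using S(3) by (metis comp_apply id_apply)
      show "norm (S y) \<le> r * norm y" for y using r(2)[of y] by (simp add: mult.commute)
    qed
    then show ?thesis using r by blast
  qed
  then obtain rr where rr: "\<And>z. z \<in> K \<Longrightarrow> rr z > 0 \<and> good U z (rr z)" by metis
  have "K \<subseteq> (\<Union>z\<in>K. ball z (1 / (2 * rr z)))"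
  proof
    fix z assume "z \<in> K" then have "z \<in> ball z (1 / (2 * rr z))" using rr by simp
    then show "z \<in> (\<Union>z\<in>K. ball z (1 / (2 * rr z)))" using \<open>z \<in> K\<close> by blast
  qed
  then obtain F where F: "F \<subseteq> K" "finite F" "K \<subseteq> (\<Union>z\<in>F. ball z (1 / (2 * rr z)))"
    using compactE_image[OF cK, of K "\<lambda>z. ball z (1 / (2 * rr z))"] by blast
  define Rb where "Rb = 1 + (\<Sum>z\<in>F. 2 * rr z)"
  have sumnn: "0 \<le> (\<Sum>z\<in>F. 2 * rr z)" using F rr by (intro sum_nonneg) (auto simp: less_imp_le)
  then have Rbpos: "0 < Rb" by (simp add: Rb_def)
  have goodK: "good U w Rb" if wK: "w \<in> K" for w
  proof -
    obtain z where z: "z \<in> F" "w \<in> ball z (1 / (2 * rr z))" using F(3) wK by blast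
    have zK: "z \<in> K" using z F by blast
    have rz: "rr z > 0" "good U z (rr z)" using rr[OF zK] by auto
    have "cmod (z - w) < 1 / (2 * rr z)" using z(2) by (simp add: dist_norm)
    then have "cmod (z - w) * rr z \<le> 1/2" using rz(1) by (simp add: field_simps)
    then have "good U w (2 * rr z)" by (rule good_local[OF bU rz(2) rz(1)])
    moreover have "2 * rr z \<le> Rb"
    proof -
      have "2 * rr z \<le> (\<Sum>z\<in>F. 2 * rr z)"
        using F z rr by (intro member_le_sum) (auto simp: less_imp_le)
      then show ?thesis by (simp add: Rb_def)
    qed
    ultimately show ?thesis by (rule good_mono)
  qed
  show "\<exists>e>0. \<forall>V\<in>unitaries M. onorm (\<lambda>x. V x - U x) < e \<longrightarrow>
          V \<in> {U\<in>unitaries M. \<exists>k\<in>{1,2,3,4}. spectrum_in M U \<subseteq> arc k}"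
  proof (intro exI[of _ "1 / Rb"] conjI ballI impI)
    show "0 < 1 / Rb" using Rbpos by simp
    fix V assume Vu: "V \<in> unitaries M" and close: "onorm (\<lambda>x. V x - U x) < 1 / Rb"
    have VM: "V \<in> M" using Vu by (simp add: unitaries_def)
    have bV: "bounded_linear V" using unitary_props(1)[OF vn Vu] by (simp add: bounded_clinear_def)
    have "spectrum_in M V \<subseteq> arc k"
    proof
      fix z assume zs: "z \<in> spectrum_in M V"
      show "z \<in> arc k"
      proof (rule ccontr)
        assume za: "z \<notin> arc k"
        have "cmod z = 1" using unit_spec[OF vn Vu] zs by blast
        then have "z \<in> K" using za by (simp add: K_def)
        then obtain R where R: "bounded_linear R" "\<And>x. R (U x - cscale z x) = x"
          "\<And>y. U (R y) - cscale z (R y) = y" "\<And>y. norm (R y) \<le> Rb * norm y"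
          using goodK unfolding good_def by blast
        have bT: "bounded_linear (\<lambda>x. U x - cscale z x)" by (intro bounded_linear_sub bU bl_cscale)
        have bE: "bounded_linear (\<lambda>x. V x - U x)" by (intro bounded_linear_sub bV bU)
        define e where "e = onorm (\<lambda>x. V x - U x)"
        have Eb: "norm (V x - U x) \<le> e * norm x" for x using onorm[OF bE] by (simp add: e_def)
        have e0: "0 \<le> e" using onorm_pos_le[OF bE] by (simp add: e_def)
        have er: "e * Rb < 1" using close Rbpos by (simp add: e_def field_simps)
        obtain R' where R': "bounded_linear R'" "\<forall>x. R' ((U x - cscale z x) + (V x - U x)) = x"
          "\<forall>y. (U (R' y) - cscale z (R' y)) + (V (R' y) - U (R' y)) = y"
          using perturb[OF bT bE R(1) R(2) R(3) R(4) Eb less_imp_le[OF Rbpos] e0 er] by blast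
        have "z \<notin> spectrum_in M V"
        proof (rule notspec[OF vn VM R'(1)])
          show "R' (V x - cscale z x) = x" for x using R'(2)[rule_format, of x] by (simp add: algebra_simps)
          show "V (R' y) - cscale z (R' y) = y" for y using R'(3)[rule_format, of y] by (simp add: algebra_simps)
        qed
        then show False using zs by blast
      qed
    qed
    then show "V \<in> {U\<in>unitaries M. \<exists>k\<in>{1,2,3,4}. spectrum_in M U \<subseteq> arc k}"
      using Vu k by blast
  qed
qed

theorem theorem4p7:
  fixes M :: "('a::complex_hilbert \<Rightarrow> 'a) set"
  assumes "von_neumann_algebra M"
    and "\<exists>x::'a. x \<noteq> 0"
  shows "norm_open_in (unitaries M)
           {U\<in>unitaries M. \<exists>k\<in>{1,2,3,4}. spectrum_in M U \<subseteq> arc k}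
         \<and> norm_closure (sym_cube M) \<noteq> unitaries M"
  using open_part[OF assms(1)] not_dense[OF assms] by blast


end
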